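(* For all positive integers $N$ and $W$ there exists a real polynomial $F$ of degree $k$, where $k\le\left\lfloor\frac{16}{7}W^{1/4}\sqrt{N}\right\rfloor+4$, such that \[F(0)>W\sum_{i=1}^N|F(i)|.\] *)

theory Defs
  imports "HOL-Analysis.Analysis" "HOL-Computational_Algebra.Polynomial"
begin

end

theory Submission
  imports Defs
begin

fun cheb :: "nat \<Rightarrow> real poly" where
  "cheb 0 = 1"
| "cheb (Suc 0) = [:0,1:]"
| "cheb (Suc (Suc n)) = [:0,2:] * cheb (Suc n) - cheb n"

lemma cheb_cos: "poly (cheb n) (cos t) = cos (real n * t)"
proof (induction n rule: cheb.induct)
  case (3 n)
  have e1: "cos (real (Suc (Suc n)) * t) = cos (real (Suc n) * t + t)" by (simp add: algebra_simps)
  have e2: "cos (real n * t) = cos (real (Suc n) * t - t)" by (simp add: algebra_simps)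
  show ?case using 3 by (simp only: cheb.simps poly_mult poly_diff e1 e2 cos_add cos_diff) (simp add: algebra_simps)
qed auto

lemma cheb_degree: "degree (cheb n) \<le> n"
proof (induction n rule: cheb.induct)
  case (3 n)
  have "degree ([:0,2:] * cheb (Suc n)) \<le> Suc (Suc n)"
    using degree_mult_le[of "[:0,2::real:]" "cheb (Suc n)"] 3(1) by simp
  moreover have "degree (cheb n) \<le> Suc (Suc n)" using 3(2) by simp
  ultimately show ?case using degree_diff_le by (simp add: degree_diff_le)
qed auto

fun dk :: "nat \<Rightarrow> real poly" where
  "dk 0 = 1"
| "dk (Suc n) = dk n + smult 2 (cheb (Suc n))"

lemma dk_degree: "degree (dk n) \<le> n"
proof (induction n)
  case (Suc n)
  have "degree (smult 2 (cheb (Suc n))) \<le> Suc n"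
    using cheb_degree[of "Suc n"] by simp
  then show ?case using Suc by (simp add: degree_add_le)
qed auto

lemma dk_one: "poly (dk n) 1 = 2 * real n + 1"
proof (induction n)
  case (Suc n)
  have "poly (cheb (Suc n)) 1 = 1" using cheb_cos[of "Suc n" 0] by simp
  then show ?case using Suc by simp
qed auto

lemma dk_sin: "poly (dk n) (cos t) * sin (t/2) = sin ((real n + 1/2) * t)"
proof (induction n)
  case (Suc n)
  have a: "sin ((real n + 1/2) * t) = sin (real (Suc n) * t - t/2)" by (simp add: algebra_simps)
  have b: "sin ((real (Suc n) + 1/2) * t) = sin (real (Suc n) * t + t/2)" by (simp add: algebra_simps)
  have "poly (dk (Suc n)) (cos t) * sin (t/2) = sin ((real n + 1/2) * t) + 2 * cos (real (Suc n) * t) * sin (t/2)"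
    using Suc by (simp add: cheb_cos algebra_simps)
  also have "\<dots> = sin ((real (Suc n) + 1/2) * t)"
    unfolding a b sin_add sin_diff by (simp add: algebra_simps)
  finally show ?case .
qed auto

lemma sum_inv_sq: "(\<Sum>i=1..Suc N. 1 / (real i)^2) \<le> 5/3 - 1 / (real N + 3/2)"
proof (induction N)
  case 0 then show ?case by simp
next
  case (Suc N)
  have e: "1 / (real N + 3/2) - 1 / (real (Suc N) + 3/2) = 1 / ((real N + 3/2) * (real N + 5/2))"
    by (simp add: field_simps)
  have "(real N + 3/2) * (real N + 5/2) \<le> (real (Suc (Suc N)))^2"
    by (simp add: power2_eq_square algebra_simps)
  then have "1 / (real (Suc (Suc N)))^2 \<le> 1 / ((real N + 3/2) * (real N + 5/2))"
    by (intro divide_left_mono mult_pos_pos) auto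
  then have "1 / (real (Suc (Suc N)))^2 \<le> 1 / (real N + 3/2) - 1 / (real (Suc N) + 3/2)"
    using e by simp
  then show ?case using Suc by simp
qed

lemma sum_inv_sq': "N \<ge> 1 \<Longrightarrow> (\<Sum>i=1..N. 1 / (real i)^2) \<le> 5/3"
proof -
  assume "N \<ge> 1"
  then obtain M where M: "N = Suc M" by (cases N) auto
  have "1 / (real M + 3/2) \<ge> 0" by simp
  then show ?thesis using sum_inv_sq[of M] unfolding M by linarith
qed

lemma main_bound:
  assumes "N \<ge> 1" "i \<ge> 1" "i \<le> N"
  shows "(poly (dk n) (1 - 2 * real i / real N))^4 \<le> (real N)^2 / (real i)^2"
proof -
  define y where "y = 1 - 2 * real i / real N"
  have yb: "-1 \<le> y" "y \<le> 1" using assms by (auto simp: y_def field_simps)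
  define t where "t = arccos y"
  have ct: "cos t = y" using yb by (simp add: t_def cos_arccos)
  have "cos t = 1 - 2 * (sin (t/2))^2" using cos_double_sin[of "t/2"] by simp
  then have s2: "(sin (t/2))^2 = real i / real N" using ct y_def by simp
  have "\<bar>poly (dk n) y\<bar> * \<bar>sin (t/2)\<bar> \<le> 1"
    using dk_sin[of n t] ct by (metis abs_mult abs_sin_le_one)
  then have "(\<bar>poly (dk n) y\<bar> * \<bar>sin (t/2)\<bar>)^4 \<le> 1"
    by (simp add: power_le_one)
  then have "(poly (dk n) y)^4 * ((sin (t/2))^2)^2 \<le> 1"
  proof -
    have "(\<bar>poly (dk n) y\<bar> * \<bar>sin (t/2)\<bar>)^4 = (poly (dk n) y)^4 * ((sin (t/2))^2)^2"
      by (simp add: power_mult_distrib power_even_abs flip: power_mult)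
    then show ?thesis using \<open>(\<bar>poly (dk n) y\<bar> * \<bar>sin (t/2)\<bar>)^4 \<le> 1\<close> by simp
  qed
  then have "(poly (dk n) y)^4 * (real i / real N)^2 \<le> 1" using s2 by simp
  moreover have "(real i / real N)^2 > 0" using assms by simp
  ultimately have "(poly (dk n) y)^4 \<le> 1 / (real i / real N)^2"
    by (simp add: le_divide_eq)
  then show ?thesis unfolding y_def by (simp add: power_divide)
qed

theorem lemma4p5:
  fixes N W :: nat
  assumes "N \<ge> 1" and "W \<ge> 1"
  shows "\<exists>F :: real poly.
           int (degree F) \<le> \<lfloor>16 / 7 * root 4 (real W) * sqrt (real N)\<rfloor> + 4 \<and>
           poly F 0 > real W * (\<Sum>i=1..N. \<bar>poly F (real i)\<bar>)"
proof -
  define r where "r = root 4 (real W)"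
  define s where "s = sqrt (real N)"
  define c where "c = root 4 (5/3::real)"
  define a where "a = c * r * s"
  define n where "n = nat \<lfloor>a/2\<rfloor> + 1"
  define F where "F = (pcompose (dk n) [:1, -2/real N:])^4"
  have r0: "r \<ge> 0" "r^4 = real W" unfolding r_def by (auto simp: real_root_pow_pos2)
  have s0: "s \<ge> 0" "s^2 = real N" unfolding s_def by auto
  have c0: "c \<ge> 0" "c^4 = 5/3" unfolding c_def by (auto simp: real_root_pow_pos2)
  have a0: "a \<ge> 0" unfolding a_def using r0 s0 c0 by simp
  have a4: "a^4 = 5/3 * real W * (real N)^2"
  proof -
    have "a^4 = c^4 * r^4 * (s^2)^2" unfolding a_def by (simp add: power_mult_distrib flip: power_mult)
    then show ?thesis using r0 s0 c0 by simp
  qed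
  have c8: "c \<le> 8/7"
  proof -
    have "c^4 \<le> (8/7)^4" unfolding c0(2) by (simp add: power_divide)
    then show ?thesis using c0(1) by simp
  qed
  have fl: "\<lfloor>a/2\<rfloor> \<ge> 0" using a0 by simp
  have degF: "degree F \<le> 4 * n"
  proof -
    have "degree F \<le> 4 * degree (pcompose (dk n) [:1, -2/real N:])"
      unfolding F_def by (metis degree_power_le mult.commute)
    also have "degree (pcompose (dk n) [:1, -2/real N:]) \<le> n"
      using dk_degree[of n] by (simp add: degree_pcompose)
    finally show ?thesis by simp
  qed
  have "of_int (4 * \<lfloor>a/2\<rfloor>) \<le> 16 / 7 * r * s"
  proof -
    have "of_int (4 * \<lfloor>a/2\<rfloor>) \<le> 2 * a" by linarith
    also have "2 * a \<le> 16 / 7 * r * s"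
    proof -
      have "c * (r * s) \<le> 8/7 * (r * s)" using c8 r0 s0 by (intro mult_right_mono) auto
      then show ?thesis unfolding a_def by (simp add: mult.assoc)
    qed
    finally show ?thesis .
  qed
  then have "4 * \<lfloor>a/2\<rfloor> \<le> \<lfloor>16 / 7 * r * s\<rfloor>" by (simp add: le_floor_iff)
  then have deg: "int (degree F) \<le> \<lfloor>16 / 7 * r * s\<rfloor> + 4"
  proof -
    have "int (degree F) \<le> int (4 * n)" using degF by simp
    also have "int (4 * n) = 4 * \<lfloor>a/2\<rfloor> + 4" unfolding n_def using fl by simp
    finally show ?thesis using \<open>4 * \<lfloor>a/2\<rfloor> \<le> \<lfloor>16 / 7 * r * s\<rfloor>\<close> by linarith
  qed
  have pF: "poly F x = (poly (dk n) (1 - 2 * x / real N))^4" for x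
    unfolding F_def by (simp add: poly_pcompose algebra_simps)
  have F0: "poly F 0 = (2 * real n + 1)^4" using pF[of 0] dk_one by simp
  have na: "2 * real n + 1 > a"
  proof -
    have "real (nat \<lfloor>a/2\<rfloor>) = of_int \<lfloor>a/2\<rfloor>" using fl by simp
    moreover have "a < 2 * of_int \<lfloor>a/2\<rfloor> + 2" by linarith
    ultimately show ?thesis unfolding n_def by (simp add: algebra_simps)
  qed
  have "(\<Sum>i=1..N. \<bar>poly F (real i)\<bar>) \<le> (\<Sum>i=1..N. (real N)^2 * (1 / (real i)^2))"
  proof (rule sum_mono)
    fix i assume "i \<in> {1..N}"
    then have "\<bar>poly F (real i)\<bar> = (poly (dk n) (1 - 2 * real i / real N))^4"
      "(poly (dk n) (1 - 2 * real i / real N))^4 \<le> (real N)^2 / (real i)^2"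
      using pF main_bound[of N i n] assms by auto
    then show "\<bar>poly F (real i)\<bar> \<le> (real N)^2 * (1 / (real i)^2)" by simp
  qed
  also have "\<dots> = (real N)^2 * (\<Sum>i=1..N. 1 / (real i)^2)" by (simp add: sum_distrib_left)
  also have "\<dots> \<le> (real N)^2 * (5/3)" using sum_inv_sq'[OF assms(1)] by (intro mult_left_mono) auto
  finally have S: "(\<Sum>i=1..N. \<bar>poly F (real i)\<bar>) \<le> (real N)^2 * (5/3)" .
  have "real W * (\<Sum>i=1..N. \<bar>poly F (real i)\<bar>) \<le> real W * ((real N)^2 * (5/3))"
    using S by (intro mult_left_mono) auto
  also have "\<dots> = a^4" using a4 by simp
  also have "\<dots> < (2 * real n + 1)^4" using na a0 by (intro power_strict_mono) auto
  finally have val: "poly F 0 > real W * (\<Sum>i=1..N. \<bar>poly F (real i)\<bar>)" using F0 by simp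
  show ?thesis using deg val unfolding r_def s_def by blast
qed

end
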